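(* Under the hypotheses and notation of the context (in particular with $\xi_k^c,\eta_k^c$, $k=1,2$, as defined there), the Geronimus perturbed monic orthogonal polynomials satisfy $$[Q_n^{c,N}]''(x)+\mathcal R(x;n)[Q_n^{c,N}]'(x)+\mathcal S(x;n)Q_n^{c,N}(x)=0,$$ where $$\mathcal R(x;n)=-\Big(\xi_1^c(x;n)+\eta_2^c(x;n)+\frac{[\eta_1^c(x;n)]'}{\eta_1^c(x;n)}\Big),$$ $$\mathcal S(x;n)=\xi_1^c(x;n)\eta_2^c(x;n)-\eta_1^c(x;n)\xi_2^c(x;n)+\frac{\xi_1^c(x;n)[\eta_1^c(x;n)]'-[\xi_1^c(x;n)]'\eta_1^c(x;n)}{\eta_1^c(x;n)}.$$
   Context: $\mu$ is a positive Borel measure on $\mathbb{R}$, absolutely continuous w.r.t. Lebesgue measure, with finite moments, supported on a set $E$ with infinitely many points; $c\in\mathbb{R}\setminus E$, $N>0$. $\mu$ is (semi-)classical: its monic orthogonal polynomials $P_n$ satisfy $xP_n=P_{n+1}+\beta_nP_n+\gamma_nP_{n-1}$ and $\sigma(x)P_n'=a(x;n)P_n+b(x;n)P_{n-1}$ with polynomials $\sigma,a,b$ of degrees independent of $n$. $\{Q_n^c\}$ is the MOPS for $\int fg\frac{1}{x-c}d\mu$; $\{Q_n^{c,N}\}$ is the MOPS for $\int fg\frac{1}{x-c}d\mu+Nf(c)g(c)$. $\Lambda_n^c=\frac{\pi_{n-1}-r_{n-1}}{1+NB_n^c}-\pi_{n-1}$ with $\pi_{n-1}=P_n(c)/P_{n-1}(c)$,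 $r_{n-1}=F_n(c)/F_{n-1}(c)$, $F_n(s)=\int\frac{P_n(x)}{x-s}d\mu(x)$, $F_{-1}=1$, $B_n^c=\frac{-Q_n^c(c)P_{n-1}(c)}{\int P_{n-1}^2d\mu}$. Define $B_2=\Lambda_{n-1}^c\big(\frac{1}{\Lambda_{n-1}^c}+\frac{x-\beta_{n-1}}{\gamma_{n-1}}\big)$, $\Delta=B_2+\frac{\Lambda_n^c\Lambda_{n-1}^c}{\gamma_{n-1}}$, $C_1=\frac{1}{\sigma}\big(a(x;n)-\Lambda_n^c\frac{b(x;n-1)}{\gamma_{n-1}}\big)$, $D_1=\frac1\sigma\big(b(x;n)+\Lambda_n^cb(x;n-1)\big(\frac{a(x;n-1)}{b(x;n-1)}+\frac{x-\beta_{n-1}}{\gamma_{n-1}}\big)\big)$, $C_2=\frac{-\Lambda_{n-1}^c}{\sigma}\big(\frac{a(x;n)}{\gamma_{n-1}}+\frac{b(x;n-1)}{\gamma_{n-1}}\big(\frac{1}{\Lambda_{n-1}^c}+\frac{x-\beta_{n-1}}{\gamma_{n-1}}\big)\big)$, $D_2=\frac{\Lambda_{n-1}^c}{\sigma}\big[\frac{\sigma-b(x;n)}{\gamma_{n-1}}+b(x;n-1)\big(\frac{a(x;n-1)}{b(x;n-1)}+\frac{x-\beta_{n-1}}{\gamma_{n-1}}\big)\big(\frac{1}{\Lambda_{n-1}^c}+\frac{x-\beta_{n-1}}{\gamma_{n-1}}\big)\big]$, and for $k=1,2$: $\xi_k^c=\frac{C_kB_2\gamma_{n-1}+D_k\Lambda_{n-1}^c}{\Delta\gamma_{n-1}}$,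 $\eta_k^c=\frac{D_k-C_k\Lambda_n^c}{\Delta}$ (all functions of $x$ and $n$). The statement concerns indices $n$ for which all quantities are defined. *)

theory Defs
  imports "HOL-Analysis.Analysis" "HOL-Computational_Algebra.Polynomial"
begin

definition msupport :: "real measure \<Rightarrow> real set" where
  "msupport \<mu> = {x. \<forall>e>0. emeasure \<mu> {x - e<..<x + e} > 0}"

definition MOPS :: "(real poly \<Rightarrow> real poly \<Rightarrow> real) \<Rightarrow> (nat \<Rightarrow> real poly) \<Rightarrow> bool" where
  "MOPS L P \<longleftrightarrow> (\<forall>n. degree (P n) = n \<and> lead_coeff (P n) = 1 \<and>
       (\<forall>m<n. L (P n) (P m) = 0) \<and> L (P n) (P n) \<noteq> 0)"

definition ip_mu :: "real measure \<Rightarrow> real poly \<Rightarrow> real poly \<Rightarrow> real" where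
  "ip_mu \<mu> f g = (\<integral>x. poly f x * poly g x \<partial>\<mu>)"

definition ip_geron :: "real measure \<Rightarrow> real \<Rightarrow> real poly \<Rightarrow> real poly \<Rightarrow> real" where
  "ip_geron \<mu> c f g = (\<integral>x. poly f x * poly g x / (x - c) \<partial>\<mu>)"

definition ip_geron_N :: "real measure \<Rightarrow> real \<Rightarrow> real \<Rightarrow> real poly \<Rightarrow> real poly \<Rightarrow> real" where
  "ip_geron_N \<mu> c N f g = ip_geron \<mu> c f g + N * poly f c * poly g c"

definition Fm :: "real measure \<Rightarrow> (nat \<Rightarrow> real poly) \<Rightarrow> nat \<Rightarrow> real \<Rightarrow> real" where
  "Fm \<mu> P n s = (\<integral>x. poly (P n) x / (x - s) \<partial>\<mu>)"

(* pi_{n-1} = P_n(c)/P_{n-1}(c) *)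
definition pic :: "(nat \<Rightarrow> real poly) \<Rightarrow> real \<Rightarrow> nat \<Rightarrow> real" where
  "pic P c n = poly (P n) c / poly (P (n - 1)) c"

(* r_{n-1} = F_n(c)/F_{n-1}(c) *)
definition rc :: "real measure \<Rightarrow> (nat \<Rightarrow> real poly) \<Rightarrow> real \<Rightarrow> nat \<Rightarrow> real" where
  "rc \<mu> P c n = Fm \<mu> P n c / Fm \<mu> P (n - 1) c"

definition Bc :: "real measure \<Rightarrow> (nat \<Rightarrow> real poly) \<Rightarrow> (nat \<Rightarrow> real poly) \<Rightarrow> real \<Rightarrow> nat \<Rightarrow> real" where
  "Bc \<mu> P Qc c n = - poly (Qc n) c * poly (P (n - 1)) c / (\<integral>x. (poly (P (n - 1)) x)^2 \<partial>\<mu>)"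

definition Lam :: "real measure \<Rightarrow> (nat \<Rightarrow> real poly) \<Rightarrow> (nat \<Rightarrow> real poly) \<Rightarrow> real \<Rightarrow> real \<Rightarrow> nat \<Rightarrow> real" where
  "Lam \<mu> P Qc c N n = (pic P c n - rc \<mu> P c n) / (1 + N * Bc \<mu> P Qc c n) - pic P c n"

(* The coefficient functions; parameters: sigma, a, b, beta, gamma,
   L1 = Lambda_n^c, L0 = Lambda_{n-1}^c, index n, variable x *)
definition B2f :: "(nat \<Rightarrow> real) \<Rightarrow> (nat \<Rightarrow> real) \<Rightarrow> real \<Rightarrow> nat \<Rightarrow> real \<Rightarrow> real" where
  "B2f \<beta> \<gamma> L0 n x = L0 * (1 / L0 + (x - \<beta> (n - 1)) / \<gamma> (n - 1))"

definition Deltaf :: "(nat \<Rightarrow> real) \<Rightarrow> (nat \<Rightarrow> real) \<Rightarrow> real \<Rightarrow> real \<Rightarrow> nat \<Rightarrow> real \<Rightarrow> real" where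
  "Deltaf \<beta> \<gamma> L1 L0 n x = B2f \<beta> \<gamma> L0 n x + L1 * L0 / \<gamma> (n - 1)"

definition C1f :: "real poly \<Rightarrow> (nat \<Rightarrow> real poly) \<Rightarrow> (nat \<Rightarrow> real poly) \<Rightarrow> (nat \<Rightarrow> real) \<Rightarrow> real \<Rightarrow> nat \<Rightarrow> real \<Rightarrow> real" where
  "C1f \<sigma> a b \<gamma> L1 n x =
     (1 / poly \<sigma> x) * (poly (a n) x - L1 * poly (b (n - 1)) x / \<gamma> (n - 1))"

definition D1f :: "real poly \<Rightarrow> (nat \<Rightarrow> real poly) \<Rightarrow> (nat \<Rightarrow> real poly) \<Rightarrow> (nat \<Rightarrow> real) \<Rightarrow> (nat \<Rightarrow> real) \<Rightarrow> real \<Rightarrow> nat \<Rightarrow> real \<Rightarrow> real" where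
  "D1f \<sigma> a b \<beta> \<gamma> L1 n x =
     (1 / poly \<sigma> x) * (poly (b n) x + L1 * poly (b (n - 1)) x *
        (poly (a (n - 1)) x / poly (b (n - 1)) x + (x - \<beta> (n - 1)) / \<gamma> (n - 1)))"

definition C2f :: "real poly \<Rightarrow> (nat \<Rightarrow> real poly) \<Rightarrow> (nat \<Rightarrow> real poly) \<Rightarrow> (nat \<Rightarrow> real) \<Rightarrow> (nat \<Rightarrow> real) \<Rightarrow> real \<Rightarrow> nat \<Rightarrow> real \<Rightarrow> real" where
  "C2f \<sigma> a b \<beta> \<gamma> L0 n x =
     (- L0 / poly \<sigma> x) * (poly (a n) x / \<gamma> (n - 1) + poly (b (n - 1)) x / \<gamma> (n - 1) *
        (1 / L0 + (x - \<beta> (n - 1)) / \<gamma> (n - 1)))"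

definition D2f :: "real poly \<Rightarrow> (nat \<Rightarrow> real poly) \<Rightarrow> (nat \<Rightarrow> real poly) \<Rightarrow> (nat \<Rightarrow> real) \<Rightarrow> (nat \<Rightarrow> real) \<Rightarrow> real \<Rightarrow> nat \<Rightarrow> real \<Rightarrow> real" where
  "D2f \<sigma> a b \<beta> \<gamma> L0 n x =
     (L0 / poly \<sigma> x) * ((poly \<sigma> x - poly (b n) x) / \<gamma> (n - 1) + poly (b (n - 1)) x *
        (poly (a (n - 1)) x / poly (b (n - 1)) x + (x - \<beta> (n - 1)) / \<gamma> (n - 1)) *
        (1 / L0 + (x - \<beta> (n - 1)) / \<gamma> (n - 1)))"

definition xi1 :: "real poly \<Rightarrow> (nat \<Rightarrow> real poly) \<Rightarrow> (nat \<Rightarrow> real poly) \<Rightarrow> (nat \<Rightarrow> real) \<Rightarrow> (nat \<Rightarrow> real) \<Rightarrow> real \<Rightarrow> real \<Rightarrow> nat \<Rightarrow> real \<Rightarrow> real" where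
  "xi1 \<sigma> a b \<beta> \<gamma> L1 L0 n x =
     (C1f \<sigma> a b \<gamma> L1 n x * B2f \<beta> \<gamma> L0 n x * \<gamma> (n - 1) + D1f \<sigma> a b \<beta> \<gamma> L1 n x * L0)
     / (Deltaf \<beta> \<gamma> L1 L0 n x * \<gamma> (n - 1))"

definition eta1 :: "real poly \<Rightarrow> (nat \<Rightarrow> real poly) \<Rightarrow> (nat \<Rightarrow> real poly) \<Rightarrow> (nat \<Rightarrow> real) \<Rightarrow> (nat \<Rightarrow> real) \<Rightarrow> real \<Rightarrow> real \<Rightarrow> nat \<Rightarrow> real \<Rightarrow> real" where
  "eta1 \<sigma> a b \<beta> \<gamma> L1 L0 n x =
     (D1f \<sigma> a b \<beta> \<gamma> L1 n x - C1f \<sigma> a b \<gamma> L1 n x * L1) / Deltaf \<beta> \<gamma> L1 L0 n x"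

definition xi2 :: "real poly \<Rightarrow> (nat \<Rightarrow> real poly) \<Rightarrow> (nat \<Rightarrow> real poly) \<Rightarrow> (nat \<Rightarrow> real) \<Rightarrow> (nat \<Rightarrow> real) \<Rightarrow> real \<Rightarrow> real \<Rightarrow> nat \<Rightarrow> real \<Rightarrow> real" where
  "xi2 \<sigma> a b \<beta> \<gamma> L1 L0 n x =
     (C2f \<sigma> a b \<beta> \<gamma> L0 n x * B2f \<beta> \<gamma> L0 n x * \<gamma> (n - 1) + D2f \<sigma> a b \<beta> \<gamma> L0 n x * L0)
     / (Deltaf \<beta> \<gamma> L1 L0 n x * \<gamma> (n - 1))"

definition eta2 :: "real poly \<Rightarrow> (nat \<Rightarrow> real poly) \<Rightarrow> (nat \<Rightarrow> real poly) \<Rightarrow> (nat \<Rightarrow> real) \<Rightarrow> (nat \<Rightarrow> real) \<Rightarrow> real \<Rightarrow> real \<Rightarrow> nat \<Rightarrow> real \<Rightarrow> real" where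
  "eta2 \<sigma> a b \<beta> \<gamma> L1 L0 n x =
     (D2f \<sigma> a b \<beta> \<gamma> L0 n x - C2f \<sigma> a b \<beta> \<gamma> L0 n x * L1) / Deltaf \<beta> \<gamma> L1 L0 n x"

definition Rf :: "real poly \<Rightarrow> (nat \<Rightarrow> real poly) \<Rightarrow> (nat \<Rightarrow> real poly) \<Rightarrow> (nat \<Rightarrow> real) \<Rightarrow> (nat \<Rightarrow> real) \<Rightarrow> real \<Rightarrow> real \<Rightarrow> nat \<Rightarrow> real \<Rightarrow> real" where
  "Rf \<sigma> a b \<beta> \<gamma> L1 L0 n x =
     - (xi1 \<sigma> a b \<beta> \<gamma> L1 L0 n x + eta2 \<sigma> a b \<beta> \<gamma> L1 L0 n x
        + deriv (eta1 \<sigma> a b \<beta> \<gamma> L1 L0 n) x / eta1 \<sigma> a b \<beta> \<gamma> L1 L0 n x)"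

definition Sf :: "real poly \<Rightarrow> (nat \<Rightarrow> real poly) \<Rightarrow> (nat \<Rightarrow> real poly) \<Rightarrow> (nat \<Rightarrow> real) \<Rightarrow> (nat \<Rightarrow> real) \<Rightarrow> real \<Rightarrow> real \<Rightarrow> nat \<Rightarrow> real \<Rightarrow> real" where
  "Sf \<sigma> a b \<beta> \<gamma> L1 L0 n x =
     xi1 \<sigma> a b \<beta> \<gamma> L1 L0 n x * eta2 \<sigma> a b \<beta> \<gamma> L1 L0 n x
     - eta1 \<sigma> a b \<beta> \<gamma> L1 L0 n x * xi2 \<sigma> a b \<beta> \<gamma> L1 L0 n x
     + (xi1 \<sigma> a b \<beta> \<gamma> L1 L0 n x * deriv (eta1 \<sigma> a b \<beta> \<gamma> L1 L0 n) x
        - deriv (xi1 \<sigma> a b \<beta> \<gamma> L1 L0 n) x * eta1 \<sigma> a b \<beta> \<gamma> L1 L0 n x)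
       / eta1 \<sigma> a b \<beta> \<gamma> L1 L0 n x"

end

theory Submission
  imports Defs
begin

context
  fixes \<mu> :: "real measure" and c e :: real
  assumes borel: "sets \<mu> = sets borel"
    and moments: "\<And>k. integrable \<mu> (\<lambda>t. t ^ k)"
    and epos: "e > 0"
    and AEe: "AE x in \<mu>. e \<le> \<bar>x - c\<bar>"
begin

lemma intP: "integrable \<mu> (\<lambda>x. poly p x)"
  unfolding poly_altdef by (simp add: moments)

lemma meas_poly: "(\<lambda>x. poly p x) \<in> borel_measurable \<mu>"
  using intP by blast

lemma intG: "integrable \<mu> (\<lambda>x. poly p x / (x - c))"
proof (rule Bochner_Integration.integrable_bound[where f="\<lambda>x. poly p x / e"])
  show "integrable \<mu> (\<lambda>x. poly p x / e)" using intP by simp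
  have "(\<lambda>x. poly p x / (x - c)) \<in> borel_measurable borel"
    by (measurable; intro borel_measurable_continuous_onI continuous_intros)
  then show "(\<lambda>x. poly p x / (x - c)) \<in> borel_measurable \<mu>"
    using measurable_cong_sets[OF borel refl] by blast
  show "AE x in \<mu>. norm (poly p x / (x - c)) \<le> norm (poly p x / e)"
    using AEe
  proof eventually_elim
    case (elim x)
    then have "\<bar>x-c\<bar> > 0" using epos by linarith
    then show ?case using elim epos
      by (auto simp: abs_divide field_simps intro!: mult_right_mono)
  qed
qed

end

definition bilin :: "(real poly \<Rightarrow> real poly \<Rightarrow> real) \<Rightarrow> bool" where
  "bilin L \<longleftrightarrow> (\<forall>p q r. L (p+q) r = L p r + L q r) \<and> (\<forall>a p r. L (smult a p) r = a * L p r)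
     \<and> (\<forall>p q. L p q = L q p)"

lemma bilin_add: "bilin L \<Longrightarrow> L (p+q) r = L p r + L q r" unfolding bilin_def by metis
lemma bilin_smult: "bilin L \<Longrightarrow> L (smult a p) r = a * L p r" unfolding bilin_def by metis
lemma bilin_sym: "bilin L \<Longrightarrow> L p q = L q p" unfolding bilin_def by metis
lemma bilin_add2: "bilin L \<Longrightarrow> L r (p+q) = L r p + L r q" unfolding bilin_def by metis
lemma bilin_smult2: "bilin L \<Longrightarrow> L r (smult a p) = a * L r p" unfolding bilin_def by metis
lemma bilin_zero: "bilin L \<Longrightarrow> L 0 r = 0"
  using bilin_smult[of L 0 0 r] by simp
lemma bilin_diff: "bilin L \<Longrightarrow> L (p-q) r = L p r - L q r"
  using bilin_add[of L "p-q" q r] by simp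

lemma sub_lead:
  fixes q Q :: "real poly"
  assumes "degree q \<le> n" "degree Q = n" "lead_coeff Q = 1"
  shows "q - smult (coeff q n) Q = 0 \<or> degree (q - smult (coeff q n) Q) < n"
proof -
  let ?d = "q - smult (coeff q n) Q"
  have "degree ?d \<le> n" using assms by (intro degree_diff_le) auto
  moreover have "coeff ?d n = 0" using assms by simp
  ultimately show ?thesis
  proof (cases "?d = 0")
    case False
    then have "coeff ?d (degree ?d) \<noteq> 0" by (rule leading_coeff_neq_0)
    with \<open>coeff ?d n = 0\<close> have "degree ?d \<noteq> n" by metis
    with \<open>degree ?d \<le> n\<close> show ?thesis by linarith
  qed simp
qed

lemma MOPS_D: "MOPS L Q \<Longrightarrow> degree (Q n) = n \<and> lead_coeff (Q n) = 1 \<and> coeff (Q n) n = 1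
   \<and> (\<forall>m<n. L (Q n) (Q m) = 0) \<and> L (Q n) (Q n) \<noteq> 0"
  unfolding MOPS_def by metis

lemma orth_span:
  assumes B: "bilin L" and M: "MOPS L Q"
  shows "(\<forall>m<n. L X (Q m) = 0) \<Longrightarrow> (degree p < n \<or> p = 0) \<Longrightarrow> L X p = 0"
proof (induction n arbitrary: p)
  case 0
  then have "p = 0" by auto
  then show ?case using B bilin_zero bilin_sym by metis
next
  case (Suc n)
  let ?d = "p - smult (coeff p n) (Q n)"
  have "degree p \<le> n" using Suc.prems by auto
  then have "?d = 0 \<or> degree ?d < n" using M by (intro sub_lead) (auto simp: MOPS_D)
  then have d0: "L X ?d = 0" using Suc by auto
  have q0: "L X (Q n) = 0" using Suc.prems by auto
  have "L X p = L X (?d + smult (coeff p n) (Q n))" by simp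
  also have "\<dots> = L X ?d + coeff p n * L X (Q n)" using B by (simp only: bilin_add2 bilin_smult2)
  finally show ?case using d0 q0 by simp
qed

lemma orth_lower:
  assumes B: "bilin L" and M: "MOPS L Q" and "degree p < n \<or> p = 0"
  shows "L (Q n) p = 0"
  using orth_span[OF B M, of n "Q n" p] assms MOPS_D[OF M] by blast

lemma MOPS_unique:
  assumes B: "bilin L" and M: "MOPS L Q"
    and R: "degree R = n" "lead_coeff R = 1" and orth: "\<And>p. degree p < n \<or> p = 0 \<Longrightarrow> L R p = 0"
  shows "R = Q n"
proof (rule ccontr)
  let ?D = "Q n - R"
  assume ne: "R \<noteq> Q n"
  then have D0: "?D \<noteq> 0" by simp
  have Dn: "degree ?D < n"
  proof -
    have "degree R \<le> n" using R by simp
    define E where "E = R - smult (coeff R n) (Q n)"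
    have "?D = - E" using R by (simp add: E_def)
    moreover have "E = 0 \<or> degree E < n"
      unfolding E_def using M R by (intro sub_lead) (auto simp: MOPS_D)
    ultimately show ?thesis using D0 by (metis degree_minus neg_0_equal_iff_equal)
  qed
  have orthD: "L ?D p = 0" if "degree p < n \<or> p = 0" for p
    using orth_lower[OF B M that] orth[OF that] bilin_diff[OF B] by simp
  let ?d = "degree ?D"
  let ?l = "coeff ?D ?d"
  have l0: "?l \<noteq> 0" by (rule leading_coeff_neq_0[OF D0])
  have "degree (Q ?d) < n" using Dn MOPS_D[OF M, of ?d] by simp
  then have "L ?D (Q ?d) = 0" using orthD[of "Q ?d"] by blast
  then have "L (Q ?d) ?D = 0" using bilin_sym[OF B] by metis
  moreover have "?D - smult ?l (Q ?d) = 0 \<or> degree (?D - smult ?l (Q ?d)) < ?d"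
    using M by (intro sub_lead) (auto simp: MOPS_D)
  then have "L (Q ?d) (?D - smult ?l (Q ?d)) = 0" using orth_lower[OF B M] by blast
  moreover have gen: "\<And>a b :: real poly. L (Q ?d) b = L (Q ?d) (a + (b - a))" by simp
  moreover note gen[of "smult ?l (Q ?d)" ?D]
  moreover have "L (Q ?d) (smult ?l (Q ?d) + (?D - smult ?l (Q ?d))) = ?l * L (Q ?d) (Q ?d) + L (Q ?d) (?D - smult ?l (Q ?d))"
    using B by (simp only: bilin_add2 bilin_smult2)
  ultimately have "?l * L (Q ?d) (Q ?d) = 0" by simp
  then show False using l0 MOPS_D[OF M, of ?d] by simp
qed

lemma MOPS_0: "MOPS L Q \<Longrightarrow> Q 0 = 1"
proof -
  assume "MOPS L Q"
  then have "degree (Q 0) = 0" "coeff (Q 0) 0 = 1" using MOPS_D by blast+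
  then show "Q 0 = 1" using degree_0_id[of "Q 0"] by (simp add: one_pCons)
qed

context
  fixes \<mu> :: "real measure" and c e :: real
  assumes borel: "sets \<mu> = sets borel"
    and moments: "\<And>k. integrable \<mu> (\<lambda>t. t ^ k)"
    and epos: "e > 0"
    and AEe: "AE x in \<mu>. e \<le> \<bar>x - c\<bar>"
begin

lemma intP': "integrable \<mu> (\<lambda>x. poly p x)"
  by (rule intP[OF borel moments epos AEe])

lemma intG': "integrable \<mu> (\<lambda>x. poly p x / (x - c))"
  by (rule intG[OF borel moments epos AEe])

lemma intP2: "integrable \<mu> (\<lambda>x. poly p x * poly q x)"
  using intP'[of "p*q"] by simp

lemma intG2: "integrable \<mu> (\<lambda>x. poly p x * poly q x / (x - c))"
  using intG'[of "p*q"] by simp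

lemma AEne: "AE x in \<mu>. x \<noteq> c"
  using AEe by eventually_elim (use epos in auto)

lemma bilin_mu: "bilin (ip_mu \<mu>)"
  unfolding bilin_def ip_mu_def
proof (intro conjI allI)
  fix p q r
  show "(\<integral>x. poly (p + q) x * poly r x \<partial>\<mu>) = (\<integral>x. poly p x * poly r x \<partial>\<mu>) + (\<integral>x. poly q x * poly r x \<partial>\<mu>)"
    using intP2[of p r] intP2[of q r] by (simp add: distrib_right)
  show "(\<integral>x. poly p x * poly q x \<partial>\<mu>) = (\<integral>x. poly q x * poly p x \<partial>\<mu>)"
    by (simp add: mult.commute)
next
  fix a p r
  show "(\<integral>x. poly (smult a p) x * poly r x \<partial>\<mu>) = a * (\<integral>x. poly p x * poly r x \<partial>\<mu>)"
    by (simp add: mult.assoc)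
qed

lemma bilin_G: "bilin (ip_geron_N \<mu> c N)"
  unfolding bilin_def ip_geron_N_def ip_geron_def
proof (intro conjI allI)
  fix p q r
  show "(\<integral>x. poly (p + q) x * poly r x / (x - c) \<partial>\<mu>) + N * poly (p + q) c * poly r c =
       (\<integral>x. poly p x * poly r x / (x - c) \<partial>\<mu>) + N * poly p c * poly r c +
       ((\<integral>x. poly q x * poly r x / (x - c) \<partial>\<mu>) + N * poly q c * poly r c)"
    using intG2[of p r] intG2[of q r] by (simp add: distrib_right add_divide_distrib algebra_simps)
  show "(\<integral>x. poly p x * poly q x / (x - c) \<partial>\<mu>) + N * poly p c * poly q c =
        (\<integral>x. poly q x * poly p x / (x - c) \<partial>\<mu>) + N * poly q c * poly p c"
    by (simp add: mult.commute mult.left_commute)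
next
  fix a p r
  have eq: "(\<lambda>x. poly (smult a p) x * poly r x / (x - c)) = (\<lambda>x. a * (poly p x * poly r x / (x - c)))"
    by (rule ext) simp
  have "(\<integral>x. poly (smult a p) x * poly r x / (x - c) \<partial>\<mu>) = (\<integral>x. a * (poly p x * poly r x / (x - c)) \<partial>\<mu>)"
    by (simp only: eq)
  also have "\<dots> = a * (\<integral>x. poly p x * poly r x / (x - c) \<partial>\<mu>)" by (rule integral_mult_right_zero)
  finally have "(\<integral>x. poly (smult a p) x * poly r x / (x - c) \<partial>\<mu>) = a * (\<integral>x. poly p x * poly r x / (x - c) \<partial>\<mu>)" .
  then show "(\<integral>x. poly (smult a p) x * poly r x / (x - c) \<partial>\<mu>) + N * poly (smult a p) c * poly r c =
       a * ((\<integral>x. poly p x * poly r x / (x - c) \<partial>\<mu>) + N * poly p c * poly r c)"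
    by (simp add: algebra_simps)
qed


lemma conn:
  assumes PM: "MOPS (ip_mu \<mu>) P" and QM: "MOPS (ip_geron_N \<mu> c N) Q" and n1: "n \<ge> 1"
    and den: "Fm \<mu> P (n-1) c + N * poly (P (n-1)) c \<noteq> 0"
  shows "Q n = P n + smult (-(Fm \<mu> P n c + N * poly (P n) c) / (Fm \<mu> P (n-1) c + N * poly (P (n-1)) c)) (P (n-1))"
proof -
  define l where "l = -(Fm \<mu> P n c + N * poly (P n) c) / (Fm \<mu> P (n-1) c + N * poly (P (n-1)) c)"
  define R where "R = P n + smult l (P (n-1))"
  have dPn: "degree (P n) = n" and dPn1: "degree (P (n-1)) = n - 1"
    using MOPS_D[OF PM] by blast+
  have cPn: "coeff (P n) n = 1" using MOPS_D[OF PM] by blast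
  have dsm: "degree (smult l (P (n-1))) < degree (P n)"
    using dPn dPn1 n1 degree_smult_le[of l "P (n-1)"] by linarith
  have dR: "degree R = n" unfolding R_def using degree_add_eq_left[OF dsm] dPn by simp
  have lR: "lead_coeff R = 1" using dR cPn dPn1 n1 by (simp add: R_def coeff_eq_0)
  have orth: "ip_geron_N \<mu> c N R q = 0" if qd: "degree q < n \<or> q = 0" for q
  proof -
    define s where "s = synthetic_div q c"
    have qs: "poly q x = (x - c) * poly s x + poly q c" for x
    proof -
      have "poly q x = poly ([:-c, 1:] * synthetic_div q c + [:poly q c:]) x"
        by (simp only: synthetic_div_correct')
      then show ?thesis by (simp add: s_def algebra_simps)
    qed
    have sdeg: "degree s < n \<or> s = 0"
    proof (cases "degree q = 0")
      case True then show ?thesis by (simp add: s_def synthetic_div_eq_0_iff)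
    next
      case False then show ?thesis using qd by (auto simp: s_def degree_synthetic_div)
    qed
    have sdeg1: "degree s < n - 1 \<or> s = 0"
    proof (cases "degree q = 0")
      case True then show ?thesis by (simp add: s_def synthetic_div_eq_0_iff)
    next
      case False then show ?thesis using qd by (auto simp: s_def degree_synthetic_div)
    qed
    have o1: "ip_mu \<mu> (P n) s = 0" by (rule orth_lower[OF bilin_mu PM sdeg])
    have o2: "ip_mu \<mu> (P (n-1)) s = 0" by (rule orth_lower[OF bilin_mu PM sdeg1])
    have oR: "ip_mu \<mu> R s = 0"
      unfolding R_def using o1 o2 bilin_add[OF bilin_mu] bilin_smult[OF bilin_mu] by simp
    have I1: "(\<integral>x. poly R x * poly q x / (x - c) \<partial>\<mu>)
        = (\<integral>x. poly R x * poly s x + poly q c * (poly R x / (x - c)) \<partial>\<mu>)"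
    proof (rule integral_cong_AE)
      show "(\<lambda>x. poly R x * poly q x / (x - c)) \<in> borel_measurable \<mu>"
        using intG2 by blast
      have "integrable \<mu> (\<lambda>x. poly R x * poly s x + poly q c * (poly R x / (x - c)))"
        using intP2[of R s] intG'[of R] by (intro Bochner_Integration.integrable_add integrable_mult_right) auto
      then show "(\<lambda>x. poly R x * poly s x + poly q c * (poly R x / (x - c))) \<in> borel_measurable \<mu>"
        by blast
      show "AE x in \<mu>. poly R x * poly q x / (x - c) = poly R x * poly s x + poly q c * (poly R x / (x - c))"
        using AEne
      proof eventually_elim
        case (elim x)
        then have "x - c \<noteq> 0" by simp
        then show ?case by (subst qs) (simp add: field_simps)
      qed
    qed
    also have "\<dots> = ip_mu \<mu> R s + poly q c * (\<integral>x. poly R x / (x - c) \<partial>\<mu>)"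
    proof -
      have i1: "integrable \<mu> (\<lambda>x. poly R x * poly s x)" by (rule intP2)
      have i2: "integrable \<mu> (\<lambda>x. poly q c * (poly R x / (x - c)))"
        by (rule integrable_mult_right) (rule intG')
      show ?thesis unfolding ip_mu_def by (simp only: Bochner_Integration.integral_add[OF i1 i2] integral_mult_right_zero)
    qed
    also have "(\<integral>x. poly R x / (x - c) \<partial>\<mu>) = Fm \<mu> P n c + l * Fm \<mu> P (n-1) c"
    proof -
      have eq: "(\<lambda>x. poly R x / (x - c)) = (\<lambda>x. poly (P n) x / (x - c) + l * (poly (P (n-1)) x / (x - c)))"
        by (rule ext) (simp add: R_def add_divide_distrib)
      have i1: "integrable \<mu> (\<lambda>x. poly (P n) x / (x - c))" by (rule intG')
      have i2: "integrable \<mu> (\<lambda>x. l * (poly (P (n-1)) x / (x - c)))"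
        by (rule integrable_mult_right) (rule intG')
      show ?thesis unfolding eq Fm_def
        by (simp only: Bochner_Integration.integral_add[OF i1 i2] integral_mult_right_zero)
    qed
    finally have A: "ip_geron \<mu> c R q = poly q c * (Fm \<mu> P n c + l * Fm \<mu> P (n-1) c)"
      using oR by (simp add: ip_geron_def)
    have Rc: "poly R c = poly (P n) c + l * poly (P (n-1)) c" by (simp add: R_def)
    have Z: "Fm \<mu> P n c + l * Fm \<mu> P (n-1) c + N * (poly (P n) c + l * poly (P (n-1)) c) = 0"
      using den by (simp add: l_def field_simps)
    have "ip_geron_N \<mu> c N R q = poly q c * (Fm \<mu> P n c + l * Fm \<mu> P (n-1) c + N * (poly (P n) c + l * poly (P (n-1)) c))"
      unfolding ip_geron_N_def A Rc by (simp only: distrib_left distrib_right mult.assoc mult.commute mult.left_commute)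
    then show ?thesis by (simp only: Z mult_zero_right)
  qed
  have "R = Q n" by (rule MOPS_unique[OF bilin_G QM dR lR orth])
  then show ?thesis by (simp add: R_def l_def)
qed

lemma alg1: "(d::real) \<noteq> 0 \<Longrightarrow> ((c + d - b) * p - g * q) / d = (p + (c - b) * (p / d)) - g * (q / d)"
  by (simp add: field_simps)
lemma alg2: "(d::real) \<noteq> 0 \<Longrightarrow> (c + d - b) / d = 1 + (c - b) * (1 / d)"
  by (simp add: field_simps)

lemma hrel:
  assumes PM: "MOPS (ip_mu \<mu>) P"
    and rec: "\<And>k. k \<ge> 1 \<Longrightarrow>
       [:0, 1:] * P k = P (Suc k) + smult (\<beta> k) (P k) + smult (\<gamma> k) (P (k - 1))"
    and k1: "k \<ge> 1"
  shows "ip_mu \<mu> (P k) (P k) = \<gamma> k * ip_mu \<mu> (P (k-1)) (P (k-1))"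
proof -
  have B: "bilin (ip_mu \<mu>)" by (rule bilin_mu)
  have z1: "ip_mu \<mu> (P (Suc k)) (P (k-1)) = 0"
    by (rule orth_lower[OF B PM]) (use MOPS_D[OF PM, of "k-1"] k1 in auto)
  have z2: "ip_mu \<mu> (P k) (P (k-1)) = 0"
    by (rule orth_lower[OF B PM]) (use MOPS_D[OF PM, of "k-1"] k1 in auto)
  have "ip_mu \<mu> ([:0, 1:] * P k) (P (k-1)) = ip_mu \<mu> (P (Suc k) + smult (\<beta> k) (P k) + smult (\<gamma> k) (P (k - 1))) (P (k-1))"
    by (simp only: rec[OF k1])
  also have "\<dots> = \<gamma> k * ip_mu \<mu> (P (k-1)) (P (k-1))"
    using z1 z2 by (simp add: bilin_add[OF B] bilin_smult[OF B])
  finally have e1: "ip_mu \<mu> ([:0, 1:] * P k) (P (k-1)) = \<gamma> k * ip_mu \<mu> (P (k-1)) (P (k-1))" .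
  have e2: "ip_mu \<mu> ([:0, 1:] * P k) (P (k-1)) = ip_mu \<mu> (P k) ([:0, 1:] * P (k-1))"
    unfolding ip_mu_def by (simp add: ac_simps)
  define Y where "Y = [:0, 1:] * P (k-1)"
  have Yp: "Y = pCons 0 (P (k-1))" by (simp add: Y_def)
  have nz: "P (k-1) \<noteq> 0" using MOPS_D[OF PM, of "k-1"] by auto
  have dY: "degree Y \<le> k" using Yp nz MOPS_D[OF PM, of "k-1"] k1 by simp
  have cY: "coeff Y k = 1" using Yp MOPS_D[OF PM, of "k-1"] k1
    by (cases k) auto
  have "Y - smult (coeff Y k) (P k) = 0 \<or> degree (Y - smult (coeff Y k) (P k)) < k"
    by (rule sub_lead[OF dY]) (use MOPS_D[OF PM, of k] in auto)
  then have "Y - P k = 0 \<or> degree (Y - P k) < k" using cY by simp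
  then have "ip_mu \<mu> (P k) (Y - P k) = 0" using orth_lower[OF B PM, of "Y - P k" k] by blast
  moreover have "ip_mu \<mu> (P k) (Y - P k) = ip_mu \<mu> (P k) Y - ip_mu \<mu> (P k) (P k)"
    using bilin_diff[OF B, of Y "P k" "P k"] bilin_sym[OF B] by metis
  ultimately have "ip_mu \<mu> (P k) Y = ip_mu \<mu> (P k) (P k)" by simp
  then show ?thesis using e1 e2 by (simp add: Y_def)
qed

lemma Frec:
  assumes PM: "MOPS (ip_mu \<mu>) P"
    and rec: "\<And>k. k \<ge> 1 \<Longrightarrow>
       [:0, 1:] * P k = P (Suc k) + smult (\<beta> k) (P k) + smult (\<gamma> k) (P (k - 1))"
    and k1: "k \<ge> 1"
  shows "Fm \<mu> P (Suc k) c = (c - \<beta> k) * Fm \<mu> P k c - \<gamma> k * Fm \<mu> P (k-1) c"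
proof -
  have B: "bilin (ip_mu \<mu>)" by (rule bilin_mu)
  have pr: "poly (P (Suc k)) x = (x - \<beta> k) * poly (P k) x - \<gamma> k * poly (P (k-1)) x" for x
  proof -
    have "poly ([:0, 1:] * P k) x = poly (P (Suc k) + smult (\<beta> k) (P k) + smult (\<gamma> k) (P (k - 1))) x"
      by (simp only: rec[OF k1])
    then show ?thesis by (simp add: algebra_simps)
  qed
  have i1: "integrable \<mu> (\<lambda>x. poly (P k) x)" by (rule intP')
  have i2: "integrable \<mu> (\<lambda>x. (c - \<beta> k) * (poly (P k) x / (x - c)))" by (rule integrable_mult_right) (rule intG')
  have i3: "integrable \<mu> (\<lambda>x. \<gamma> k * (poly (P (k-1)) x / (x - c)))" by (rule integrable_mult_right) (rule intG')
  have i12: "integrable \<mu> (\<lambda>x. poly (P k) x + (c - \<beta> k) * (poly (P k) x / (x - c)))"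
    by (rule Bochner_Integration.integrable_add[OF i1 i2])
  have "Fm \<mu> P (Suc k) c = (\<integral>x. (poly (P k) x + (c - \<beta> k) * (poly (P k) x / (x - c))) - \<gamma> k * (poly (P (k-1)) x / (x - c)) \<partial>\<mu>)"
    unfolding Fm_def
  proof (rule integral_cong_AE)
    show "(\<lambda>x. poly (P (Suc k)) x / (x - c)) \<in> borel_measurable \<mu>" using intG' by blast
    show "(\<lambda>x. (poly (P k) x + (c - \<beta> k) * (poly (P k) x / (x - c))) - \<gamma> k * (poly (P (k-1)) x / (x - c))) \<in> borel_measurable \<mu>"
      using Bochner_Integration.integrable_diff[OF i12 i3] by blast
    show "AE x in \<mu>. poly (P (Suc k)) x / (x - c) = (poly (P k) x + (c - \<beta> k) * (poly (P k) x / (x - c))) - \<gamma> k * (poly (P (k-1)) x / (x - c))"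
      using AEne
    proof eventually_elim
      case (elim x)
      then have "x - c \<noteq> 0" by simp
      have x: "x = c + (x - c)" by simp
      show ?case unfolding pr
        by (subst (1) x) (rule alg1[OF \<open>x - c \<noteq> 0\<close>])
    qed
  qed
  also have "\<dots> = (\<integral>x. poly (P k) x \<partial>\<mu>) + (c - \<beta> k) * Fm \<mu> P k c - \<gamma> k * Fm \<mu> P (k-1) c"
    unfolding Fm_def
    by (simp only: Bochner_Integration.integral_diff[OF i12 i3] Bochner_Integration.integral_add[OF i1 i2] integral_mult_right_zero)
  also have "(\<integral>x. poly (P k) x \<partial>\<mu>) = ip_mu \<mu> (P k) (P 0)"
    unfolding ip_mu_def MOPS_0[OF PM] by simp
  also have "\<dots> = 0"
    by (rule orth_lower[OF B PM]) (use MOPS_D[OF PM, of 0] k1 in auto)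
  finally show ?thesis by simp
qed

lemma Drel:
  assumes PM: "MOPS (ip_mu \<mu>) P"
    and rec0: "[:0, 1:] * P 0 = P 1 + smult (\<beta> 0) (P 0)"
    and rec: "\<And>k. k \<ge> 1 \<Longrightarrow>
       [:0, 1:] * P k = P (Suc k) + smult (\<beta> k) (P k) + smult (\<gamma> k) (P (k - 1))"
  shows "Fm \<mu> P (Suc m) c * poly (P m) c - Fm \<mu> P m c * poly (P (Suc m)) c = ip_mu \<mu> (P m) (P m)"
proof (induction m)
  case 0
  have P0: "P 0 = 1" by (rule MOPS_0[OF PM])
  have P1: "poly (P (Suc 0)) x = x - \<beta> 0" for x
  proof -
    have "poly ([:0, 1:] * P 0) x = poly (P 1 + smult (\<beta> 0) (P 0)) x" by (simp only: rec0)
    then show ?thesis by (simp add: P0)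
  qed
  have i1: "integrable \<mu> (\<lambda>x. 1::real)" using intP'[of 1] by simp
  have i2: "integrable \<mu> (\<lambda>x. (c - \<beta> 0) * (poly (P 0) x / (x - c)))" by (rule integrable_mult_right) (rule intG')
  have "Fm \<mu> P (Suc 0) c = (\<integral>x. 1 + (c - \<beta> 0) * (poly (P 0) x / (x - c)) \<partial>\<mu>)"
    unfolding Fm_def
  proof (rule integral_cong_AE)
    show "(\<lambda>x. poly (P (Suc 0)) x / (x - c)) \<in> borel_measurable \<mu>" using intG' by blast
    show "(\<lambda>x. 1 + (c - \<beta> 0) * (poly (P 0) x / (x - c))) \<in> borel_measurable \<mu>"
      using Bochner_Integration.integrable_add[OF i1 i2] by blast
    show "AE x in \<mu>. poly (P (Suc 0)) x / (x - c) = 1 + (c - \<beta> 0) * (poly (P 0) x / (x - c))"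
      using AEne
    proof eventually_elim
      case (elim x)
      then have "x - c \<noteq> 0" by simp
      have x: "x = c + (x - c)" by simp
      show ?case unfolding P1 P0 poly_1
        by (subst (1) x) (rule alg2[OF \<open>x - c \<noteq> 0\<close>])
    qed
  qed
  also have "\<dots> = (\<integral>x. 1 \<partial>\<mu>) + (c - \<beta> 0) * Fm \<mu> P 0 c"
    unfolding Fm_def by (simp only: Bochner_Integration.integral_add[OF i1 i2] integral_mult_right_zero)
  finally have "Fm \<mu> P (Suc 0) c = (\<integral>x. 1 \<partial>\<mu>) + (c - \<beta> 0) * Fm \<mu> P 0 c" .
  moreover have "ip_mu \<mu> (P 0) (P 0) = (\<integral>x. 1 \<partial>\<mu>)" by (simp add: ip_mu_def P0)
  ultimately show ?case by (simp add: P0 P1 algebra_simps)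
next
  case (Suc m)
  let ?k = "Suc m"
  have k1: "?k \<ge> 1" by simp
  have Fr: "Fm \<mu> P (Suc ?k) c = (c - \<beta> ?k) * Fm \<mu> P ?k c - \<gamma> ?k * Fm \<mu> P m c"
    using Frec[OF PM rec k1] by simp
  have pr: "poly (P (Suc ?k)) c = (c - \<beta> ?k) * poly (P ?k) c - \<gamma> ?k * poly (P m) c"
  proof -
    have "poly ([:0, 1:] * P ?k) c = poly (P (Suc ?k) + smult (\<beta> ?k) (P ?k) + smult (\<gamma> ?k) (P (?k - 1))) c"
      by (simp only: rec[OF k1])
    then show ?thesis by (simp add: algebra_simps)
  qed
  have h: "ip_mu \<mu> (P ?k) (P ?k) = \<gamma> ?k * ip_mu \<mu> (P m) (P m)"
    using hrel[OF PM rec k1] by simp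
  show ?case unfolding Fr pr h Suc.IH[symmetric] by (simp add: algebra_simps)
qed
end

lemma lin2:
  fixes D0 B2 g L0 L1 p0 p1 q0 q1 C D :: real
  assumes "D0 \<noteq> 0" "g \<noteq> 0" "D0 = B2 + L1 * L0 / g" "q0 = p0 + L1 * p1" "q1 = B2 * p1 - L0 / g * p0"
  shows "(C * B2 * g + D * L0) / (D0 * g) * q0 + (D - C * L1) / D0 * q1 = C * p0 + D * p1"
proof -
  have D0g: "D0 * g = B2 * g + L1 * L0" using assms(2,3) by (simp add: field_simps)
  have "(C * B2 * g + D * L0) / (D0 * g) * q0 + (D - C * L1) / D0 * q1
      = ((C * B2 * g + D * L0) * q0 + (D - C * L1) * g * q1) / (D0 * g)"
    using assms(1,2) by (simp add: field_simps)
  also have "(C * B2 * g + D * L0) * q0 + (D - C * L1) * g * q1 = (C * p0 + D * p1) * (D0 * g)"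
    unfolding D0g assms(4,5) using assms(2) by (simp add: field_simps)
  finally show ?thesis using assms(1,2) by simp
qed

lemma ladder:
  fixes \<sigma> :: "real poly" and a b :: "nat \<Rightarrow> real poly" and \<beta> \<gamma> :: "nat \<Rightarrow> real"
    and L1 L0 t :: real and n :: nat and P0 P1 P2 Q0 Q1 :: "real poly"
  assumes s: "poly \<sigma> t \<noteq> 0" and b1: "poly (b (n-1)) t \<noteq> 0" and g: "\<gamma> (n-1) \<noteq> 0"
    and L0: "L0 \<noteq> 0" and Dl: "Deltaf \<beta> \<gamma> L1 L0 n t \<noteq> 0"
    and h1: "\<sigma> * pderiv P0 = a n * P0 + b n * P1"
    and h2: "\<sigma> * pderiv P1 = a (n-1) * P1 + b (n-1) * P2"
    and h3: "[:0,1:] * P1 = P0 + smult (\<beta> (n-1)) P1 + smult (\<gamma> (n-1)) P2"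
    and q0: "Q0 = P0 + smult L1 P1" and q1: "Q1 = P1 + smult L0 P2"
  shows "poly (pderiv Q0) t = xi1 \<sigma> a b \<beta> \<gamma> L1 L0 n t * poly Q0 t + eta1 \<sigma> a b \<beta> \<gamma> L1 L0 n t * poly Q1 t"
    and "poly (pderiv Q1) t = xi2 \<sigma> a b \<beta> \<gamma> L1 L0 n t * poly Q0 t + eta2 \<sigma> a b \<beta> \<gamma> L1 L0 n t * poly Q1 t"
proof -
  define sv where "sv = poly \<sigma> t"
  define an where "an = poly (a n) t"
  define bn where "bn = poly (b n) t"
  define an1 where "an1 = poly (a (n-1)) t"
  define bn1 where "bn1 = poly (b (n-1)) t"
  define be where "be = \<beta> (n-1)"
  define ga where "ga = \<gamma> (n-1)"
  define p0 where "p0 = poly P0 t"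
  define p1 where "p1 = poly P1 t"
  define p2 where "p2 = poly P2 t"
  define dp0 where "dp0 = poly (pderiv P0) t"
  define dp1 where "dp1 = poly (pderiv P1) t"
  define B2 where "B2 = 1 + L0 * (t - be) / ga"
  have sv0: "sv \<noteq> 0" and bn10: "bn1 \<noteq> 0" and ga0: "ga \<noteq> 0" using s b1 g by (simp_all add: sv_def bn1_def ga_def)
  have e1: "sv * dp0 = an * p0 + bn * p1"
    using arg_cong[OF h1, of "\<lambda>p. poly p t"] by (simp add: sv_def dp0_def an_def bn_def p0_def p1_def)
  have e2: "sv * dp1 = an1 * p1 + bn1 * p2"
    using arg_cong[OF h2, of "\<lambda>p. poly p t"] by (simp add: sv_def dp1_def an1_def bn1_def p1_def p2_def)
  have e3: "t * p1 = p0 + be * p1 + ga * p2"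
    using arg_cong[OF h3, of "\<lambda>p. poly p t"] by (simp add: be_def ga_def p0_def p1_def p2_def)
  have p2e: "p2 = (t * p1 - p0 - be * p1) / ga" using e3 ga0 by (simp add: field_simps)
  have dp0e: "dp0 = (an * p0 + bn * p1) / sv" using e1 sv0 by (simp add: field_simps)
  have dp1e: "dp1 = (an1 * p1 + bn1 * p2) / sv" using e2 sv0 by (simp add: field_simps)
  have B2e: "B2f \<beta> \<gamma> L0 n t = B2" using L0 by (simp add: B2f_def B2_def be_def ga_def field_simps)
  have De: "Deltaf \<beta> \<gamma> L1 L0 n t = B2 + L1 * L0 / ga" by (simp add: Deltaf_def B2e ga_def)
  have D0: "B2 + L1 * L0 / ga \<noteq> 0" using Dl De by simp
  have Q0e: "poly Q0 t = p0 + L1 * p1" by (simp add: q0 p0_def p1_def)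
  have Q1e: "poly Q1 t = B2 * p1 - L0 / ga * p0"
    by (simp add: q1 p1_def p2e[unfolded p2_def] B2_def) (use ga0 in \<open>simp add: field_simps\<close>)
  define C1 where "C1 = C1f \<sigma> a b \<gamma> L1 n t"
  define D1 where "D1 = D1f \<sigma> a b \<beta> \<gamma> L1 n t"
  have dQ0: "poly (pderiv Q0) t = C1 * p0 + D1 * p1"
  proof -
    have "poly (pderiv Q0) t = dp0 + L1 * dp1" by (simp add: q0 pderiv_add pderiv_smult dp0_def dp1_def)
    also have "\<dots> = C1 * p0 + D1 * p1"
      unfolding dp0e dp1e p2e C1_def D1_def C1f_def D1f_def sv_def[symmetric] an_def[symmetric] bn_def[symmetric]
          an1_def[symmetric] bn1_def[symmetric] be_def[symmetric] ga_def[symmetric]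
      using sv0 bn10 ga0 by (simp add: field_simps)
    finally show ?thesis .
  qed
  show "poly (pderiv Q0) t = xi1 \<sigma> a b \<beta> \<gamma> L1 L0 n t * poly Q0 t + eta1 \<sigma> a b \<beta> \<gamma> L1 L0 n t * poly Q1 t"
    unfolding dQ0 xi1_def eta1_def B2e De C1_def[symmetric] D1_def[symmetric] ga_def[symmetric]
    by (rule lin2[OF D0 ga0 refl Q0e Q1e, symmetric])
  define C2 where "C2 = C2f \<sigma> a b \<beta> \<gamma> L0 n t"
  define D2 where "D2 = D2f \<sigma> a b \<beta> \<gamma> L0 n t"
  have pQ1: "smult ga Q1 = smult ga P1 + smult L0 ([:- be, 1:] * P1 - P0)"
  proof -
    have m: "[:- be, 1:] * P1 = [:0,1:] * P1 - smult be P1" by simp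
    have h3': "[:0,1:] * P1 = P0 + smult be P1 + smult ga P2" using h3 by (simp only: be_def ga_def)
    have X: "[:- be, 1:] * P1 - P0 = smult ga P2" unfolding m h3' by (simp add: algebra_simps)
    have A: "smult ga Q1 = smult ga P1 + smult L0 (smult ga P2)" by (simp add: q1 smult_add_right mult.commute)
    show ?thesis unfolding A X ..
  qed
  have "ga * poly (pderiv Q1) t = ga * dp1 + L0 * (p1 + (t - be) * dp1 - dp0)"
  proof -
    have "poly (pderiv (smult ga Q1)) t = poly (pderiv (smult ga P1 + smult L0 ([:- be, 1:] * P1 - P0))) t"
      by (simp only: pQ1)
    then show ?thesis by (simp add: pderiv_add pderiv_smult pderiv_mult pderiv_diff pderiv_pCons dp0_def dp1_def p1_def algebra_simps)
  qed
  then have dq1: "poly (pderiv Q1) t = dp1 + L0 / ga * (p1 + (t - be) * dp1 - dp0)"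
    using ga0 by (simp add: field_simps)
  have dQ1: "poly (pderiv Q1) t = C2 * p0 + D2 * p1"
    unfolding dq1 dp0e dp1e p2e C2_def D2_def C2f_def D2f_def sv_def[symmetric] an_def[symmetric] bn_def[symmetric]
          an1_def[symmetric] bn1_def[symmetric] be_def[symmetric] ga_def[symmetric]
    using sv0 bn10 ga0 L0 by (simp add: field_simps)
  show "poly (pderiv Q1) t = xi2 \<sigma> a b \<beta> \<gamma> L1 L0 n t * poly Q0 t + eta2 \<sigma> a b \<beta> \<gamma> L1 L0 n t * poly Q1 t"
    unfolding dQ1 xi2_def eta2_def B2e De C2_def[symmetric] D2_def[symmetric] ga_def[symmetric]
    by (rule lin2[OF D0 ga0 refl Q0e Q1e, symmetric])
qed

lemma final_alg:
  fixes q q1 dq dq1 ddq x1 e1 x2 e2 Dx De :: real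
  assumes e1: "e1 \<noteq> 0" and r1: "dq = x1 * q + e1 * q1" and r2: "dq1 = x2 * q + e2 * q1"
    and r3: "ddq = Dx * q + x1 * dq + De * q1 + e1 * dq1"
  shows "ddq + (- (x1 + e2 + De / e1)) * dq + (x1 * e2 - e1 * x2 + (x1 * De - Dx * e1) / e1) * q = 0"
  unfolding r3 r2 r1 using e1 by (simp add: field_simps)

context
  fixes \<mu> :: "real measure" and c e :: real
  assumes borel: "sets \<mu> = sets borel"
    and moments: "\<And>k. integrable \<mu> (\<lambda>t. t ^ k)"
    and epos: "e > 0"
    and AEe: "AE x in \<mu>. e \<le> \<bar>x - c\<bar>"
begin

lemma alg_Lam:
  fixes p F h Fn Pn N :: real
  assumes p: "p \<noteq> 0" and F: "F \<noteq> 0" and h: "h \<noteq> 0" and D: "Fn * p - F * Pn = h"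
    and B: "1 + N * (- (Pn + (-(Fn + 0 * Pn) / (F + 0 * p)) * p) * p / h) \<noteq> 0"
  shows "F + N * p \<noteq> 0"
    and "(Pn / p - Fn / F) / (1 + N * (- (Pn + (-(Fn + 0 * Pn) / (F + 0 * p)) * p) * p / h)) - Pn / p
         = -(Fn + N * Pn) / (F + N * p)"
proof -
  have Bv: "- (Pn + (-(Fn + 0 * Pn) / (F + 0 * p)) * p) * p / h = p / F"
  proof -
    have "- (Pn + (-(Fn + 0 * Pn) / (F + 0 * p)) * p) = h / F" using F D by (simp add: field_simps)
    then show ?thesis using h by simp
  qed
  have FN: "F + N * p \<noteq> 0"
  proof
    assume "F + N * p = 0"
    then have "1 + N * (p / F) = 0" using F by (simp add: field_simps)
    then show False using B[unfolded Bv] by simp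
  qed
  then show "F + N * p \<noteq> 0" .
  show "(Pn / p - Fn / F) / (1 + N * (- (Pn + (-(Fn + 0 * Pn) / (F + 0 * p)) * p) * p / h)) - Pn / p
         = -(Fn + N * Pn) / (F + N * p)"
  proof -
    have s1: "1 + N*(p/F) = (F + N*p)/F" using F by (simp add: field_simps)
    have s2: "Pn/p - Fn/F = (Pn*F - Fn*p)/(p*F)" using p F by (simp add: field_simps)
    have s3: "(Pn*F - Fn*p)/(p*F) / ((F + N*p)/F) = (Pn*F - Fn*p)/(p*(F + N*p))"
      using p F FN by simp
    have s4: "(Pn*F - Fn*p)/(p*(F + N*p)) - Pn/p = ((Pn*F - Fn*p) - Pn*(F + N*p))/(p*(F + N*p))"
      using p FN by (simp add: diff_divide_distrib)
    have s5: "((Pn*F - Fn*p) - Pn*(F + N*p)) = -(Fn + N*Pn) * p" by (simp add: algebra_simps)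
    show ?thesis unfolding Bv s1 s2 s3 s4 s5 using p FN by simp
  qed
qed

lemma Lam_conn:
  assumes PM: "MOPS (ip_mu \<mu>) P" and QcM: "MOPS (ip_geron \<mu> c) Qc" and QM: "MOPS (ip_geron_N \<mu> c N) Q"
    and rec0: "[:0, 1:] * P 0 = P 1 + smult (\<beta> 0) (P 0)"
    and rec: "\<And>k. k \<ge> 1 \<Longrightarrow>
       [:0, 1:] * P k = P (Suc k) + smult (\<beta> k) (P k) + smult (\<gamma> k) (P (k - 1))"
    and n1: "n \<ge> 1" and p: "poly (P (n-1)) c \<noteq> 0" and F: "Fm \<mu> P (n-1) c \<noteq> 0"
    and B: "1 + N * Bc \<mu> P Qc c n \<noteq> 0"
  shows "Q n = P n + smult (Lam \<mu> P Qc c N n) (P (n-1))"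
proof -
  have eq0: "ip_geron_N \<mu> c 0 = ip_geron \<mu> c" by (simp add: fun_eq_iff ip_geron_N_def)
  have QcM0: "MOPS (ip_geron_N \<mu> c 0) Qc" using QcM eq0 by simp
  have Qcn: "Qc n = P n + smult (-(Fm \<mu> P n c + 0 * poly (P n) c) / (Fm \<mu> P (n-1) c + 0 * poly (P (n-1)) c)) (P (n-1))"
    by (rule conn[OF borel moments epos AEe PM QcM0 n1]) (use F in simp)
  have nn: "Suc (n-1) = n" using n1 by simp
  have D: "Fm \<mu> P n c * poly (P (n-1)) c - Fm \<mu> P (n-1) c * poly (P n) c = ip_mu \<mu> (P (n-1)) (P (n-1))"
    using Drel[OF borel moments epos AEe PM rec0 rec, of "n-1"] nn by simp
  have h: "ip_mu \<mu> (P (n-1)) (P (n-1)) \<noteq> 0" using MOPS_D[OF PM] by blast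
  have hint: "(\<integral>x. (poly (P (n - 1)) x)^2 \<partial>\<mu>) = ip_mu \<mu> (P (n-1)) (P (n-1))"
    by (simp add: ip_mu_def power2_eq_square)
  have Bcv: "Bc \<mu> P Qc c n = - (poly (P n) c + (-(Fm \<mu> P n c + 0 * poly (P n) c) / (Fm \<mu> P (n-1) c + 0 * poly (P (n-1)) c)) * poly (P (n-1)) c) * poly (P (n-1)) c / ip_mu \<mu> (P (n-1)) (P (n-1))"
    unfolding Bc_def hint Qcn by simp
  note A = alg_Lam[OF p F h D B[unfolded Bcv]]
  have "Q n = P n + smult (-(Fm \<mu> P n c + N * poly (P n) c) / (Fm \<mu> P (n-1) c + N * poly (P (n-1)) c)) (P (n-1))"
    by (rule conn[OF borel moments epos AEe PM QM n1 A(1)])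
  also have "-(Fm \<mu> P n c + N * poly (P n) c) / (Fm \<mu> P (n-1) c + N * poly (P (n-1)) c) = Lam \<mu> P Qc c N n"
    unfolding Lam_def pic_def rc_def Bcv by (rule A(2)[symmetric])
  finally show ?thesis .
qed

end

theorem theorem5:
  fixes \<mu> :: "real measure" and c N :: real
    and P Qc QcN :: "nat \<Rightarrow> real poly"
    and \<beta> \<gamma> :: "nat \<Rightarrow> real"
    and \<sigma> :: "real poly" and a b :: "nat \<Rightarrow> real poly"
    and n :: nat and x :: real
  assumes borel: "sets \<mu> = sets borel"
    and ac: "absolutely_continuous lborel \<mu>"
    and moments: "\<And>k. integrable \<mu> (\<lambda>t. t ^ k)"
    and supp_inf: "infinite (msupport \<mu>)"
    and c_notin: "c \<notin> msupport \<mu>"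
    and N_pos: "N > 0"
    and P_mops: "MOPS (ip_mu \<mu>) P"
    and rec0: "[:0, 1:] * P 0 = P 1 + smult (\<beta> 0) (P 0)"
    and rec: "\<And>k. k \<ge> 1 \<Longrightarrow>
       [:0, 1:] * P k = P (Suc k) + smult (\<beta> k) (P k) + smult (\<gamma> k) (P (k - 1))"
    and struct: "\<And>k. k \<ge> 1 \<Longrightarrow> \<sigma> * pderiv (P k) = a k * P k + b k * P (k - 1)"
    and deg_ab: "\<exists>da db. \<forall>k\<ge>1. degree (a k) = da \<and> degree (b k) = db"
    and Qc_mops: "MOPS (ip_geron \<mu> c) Qc"
    and QcN_mops: "MOPS (ip_geron_N \<mu> c N) QcN"
    and n2: "n \<ge> 2"
    and defP: "poly (P (n - 1)) c \<noteq> 0" "poly (P (n - 2)) c \<noteq> 0"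
    and defF: "Fm \<mu> P (n - 1) c \<noteq> 0" "Fm \<mu> P (n - 2) c \<noteq> 0"
    and defB: "1 + N * Bc \<mu> P Qc c n \<noteq> 0" "1 + N * Bc \<mu> P Qc c (n - 1) \<noteq> 0"
    and defL0: "Lam \<mu> P Qc c N (n - 1) \<noteq> 0"
    and def_sigma: "poly \<sigma> x \<noteq> 0"
    and def_b: "poly (b (n - 1)) x \<noteq> 0"
    and def_Delta: "Deltaf \<beta> \<gamma> (Lam \<mu> P Qc c N n) (Lam \<mu> P Qc c N (n - 1)) n x \<noteq> 0"
    and def_eta1: "eta1 \<sigma> a b \<beta> \<gamma> (Lam \<mu> P Qc c N n) (Lam \<mu> P Qc c N (n - 1)) n x \<noteq> 0"
  shows "poly (pderiv (pderiv (QcN n))) x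
       + Rf \<sigma> a b \<beta> \<gamma> (Lam \<mu> P Qc c N n) (Lam \<mu> P Qc c N (n - 1)) n x * poly (pderiv (QcN n)) x
       + Sf \<sigma> a b \<beta> \<gamma> (Lam \<mu> P Qc c N n) (Lam \<mu> P Qc c N (n - 1)) n x * poly (QcN n) x = 0"
proof -
  obtain e where epos: "e > 0" and e0: "emeasure \<mu> {c - e<..<c + e} = 0"
    using c_notin unfolding msupport_def by (auto simp: not_less)
  have null: "{c - e<..<c + e} \<in> null_sets \<mu>"
    using e0 borel by (simp add: null_sets_def)
  have AEe: "AE x in \<mu>. e \<le> \<bar>x - c\<bar>"
    by (rule AE_I'[OF null]) auto
  define L1 where "L1 = Lam \<mu> P Qc c N n"
  define L0 where "L0 = Lam \<mu> P Qc c N (n - 1)"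
  have n1: "n \<ge> 1" "n - 1 \<ge> 1" using n2 by auto
  have nn: "n - 1 - 1 = n - 2" "Suc (n - 1) = n" using n2 by auto
  have c1: "QcN n = P n + smult L1 (P (n-1))"
    unfolding L1_def
    by (rule Lam_conn[OF borel moments epos AEe P_mops Qc_mops QcN_mops rec0 rec n1(1) defP(1) defF(1) defB(1)])
  have c2: "QcN (n-1) = P (n-1) + smult L0 (P (n-2))"
    using Lam_conn[OF borel moments epos AEe P_mops Qc_mops QcN_mops rec0 rec n1(2)] defP(2) defF(2) defB(2)
    unfolding L0_def nn by simp
  have g0: "\<gamma> (n - 1) \<noteq> 0"
    using hrel[OF borel moments epos AEe P_mops rec n1(2)] MOPS_D[OF P_mops, of "n-1"] by auto
  have L00: "L0 \<noteq> 0" using defL0 by (simp add: L0_def)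
  have h1: "\<sigma> * pderiv (P n) = a n * P n + b n * P (n-1)" using struct n1 by simp
  have h2: "\<sigma> * pderiv (P (n-1)) = a (n-1) * P (n-1) + b (n-1) * P (n-2)"
    using struct[OF n1(2)] unfolding nn .
  have h3: "[:0,1:] * P (n-1) = P n + smult (\<beta> (n-1)) (P (n-1)) + smult (\<gamma> (n-1)) (P (n-2))"
    using rec[OF n1(2)] unfolding nn .
  define Q where "Q = QcN n"
  define Q1 where "Q1 = QcN (n-1)"
  define U where "U = {t. poly \<sigma> t \<noteq> 0 \<and> poly (b (n-1)) t \<noteq> 0 \<and> Deltaf \<beta> \<gamma> L1 L0 n t \<noteq> 0}"
  have xU: "x \<in> U" using def_sigma def_b def_Delta by (simp add: U_def L1_def L0_def)
  have contD: "continuous_on UNIV (\<lambda>t. Deltaf \<beta> \<gamma> L1 L0 n t)"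
    unfolding Deltaf_def B2f_def using g0 by (intro continuous_intros) auto
  have oU: "open U" unfolding U_def
    by (intro open_Collect_conj open_Collect_neq continuous_intros contD)
  have cQ: "Q = P n + smult L1 (P (n-1))" using c1 by (simp add: Q_def)
  have cQ1: "Q1 = P (n-1) + smult L0 (P (n-2))" using c2 by (simp add: Q1_def)
  have R1: "poly (pderiv Q) t = xi1 \<sigma> a b \<beta> \<gamma> L1 L0 n t * poly Q t + eta1 \<sigma> a b \<beta> \<gamma> L1 L0 n t * poly Q1 t"
    if "t \<in> U" for t
  proof -
    have s: "poly \<sigma> t \<noteq> 0" and bb: "poly (b (n-1)) t \<noteq> 0" and dd: "Deltaf \<beta> \<gamma> L1 L0 n t \<noteq> 0"
      using that by (auto simp: U_def)
    show ?thesis by (rule ladder(1)[OF s bb g0 L00 dd h1 h2 h3 cQ cQ1])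
  qed
  have R2: "poly (pderiv Q1) x = xi2 \<sigma> a b \<beta> \<gamma> L1 L0 n x * poly Q x + eta2 \<sigma> a b \<beta> \<gamma> L1 L0 n x * poly Q1 x"
  proof -
    have s: "poly \<sigma> x \<noteq> 0" and bb: "poly (b (n-1)) x \<noteq> 0" and dd: "Deltaf \<beta> \<gamma> L1 L0 n x \<noteq> 0"
      using xU by (auto simp: U_def)
    show ?thesis by (rule ladder(2)[OF s bb g0 L00 dd h1 h2 h3 cQ cQ1])
  qed
  have "\<exists>D. (xi1 \<sigma> a b \<beta> \<gamma> L1 L0 n has_real_derivative D) (at x)"
  proof -
    have "xi1 \<sigma> a b \<beta> \<gamma> L1 L0 n = (\<lambda>t. xi1 \<sigma> a b \<beta> \<gamma> L1 L0 n t)" by simp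
    show ?thesis
      unfolding xi1_def C1f_def D1f_def B2f_def Deltaf_def
      using def_sigma def_b def_Delta g0 L00 unfolding Deltaf_def B2f_def L1_def[symmetric] L0_def[symmetric]
      by (intro exI) (rule derivative_eq_intros refl | simp)+
  qed
  then obtain Dx where Dx: "(xi1 \<sigma> a b \<beta> \<gamma> L1 L0 n has_real_derivative Dx) (at x)" by blast
  have "\<exists>D. (eta1 \<sigma> a b \<beta> \<gamma> L1 L0 n has_real_derivative D) (at x)"
  proof -
    show ?thesis
      unfolding eta1_def C1f_def D1f_def B2f_def Deltaf_def
      using def_sigma def_b def_Delta g0 L00 unfolding Deltaf_def B2f_def L1_def[symmetric] L0_def[symmetric]
      by (intro exI) (rule derivative_eq_intros refl | simp)+
  qed
  then obtain De where De: "(eta1 \<sigma> a b \<beta> \<gamma> L1 L0 n has_real_derivative De) (at x)" by blast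
  have dR: "((\<lambda>t. xi1 \<sigma> a b \<beta> \<gamma> L1 L0 n t * poly Q t + eta1 \<sigma> a b \<beta> \<gamma> L1 L0 n t * poly Q1 t)
      has_real_derivative (Dx * poly Q x + poly (pderiv Q) x * xi1 \<sigma> a b \<beta> \<gamma> L1 L0 n x
         + (De * poly Q1 x + poly (pderiv Q1) x * eta1 \<sigma> a b \<beta> \<gamma> L1 L0 n x))) (at x)"
    by (intro DERIV_add DERIV_mult Dx De poly_DERIV)
  have "((\<lambda>t. poly (pderiv Q) t) has_real_derivative (Dx * poly Q x + poly (pderiv Q) x * xi1 \<sigma> a b \<beta> \<gamma> L1 L0 n x
         + (De * poly Q1 x + poly (pderiv Q1) x * eta1 \<sigma> a b \<beta> \<gamma> L1 L0 n x))) (at x)"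
    by (rule has_field_derivative_transform_within_open[OF dR oU xU]) (simp add: R1)
  then have R3: "poly (pderiv (pderiv Q)) x = Dx * poly Q x + poly (pderiv Q) x * xi1 \<sigma> a b \<beta> \<gamma> L1 L0 n x
         + (De * poly Q1 x + poly (pderiv Q1) x * eta1 \<sigma> a b \<beta> \<gamma> L1 L0 n x)"
    using DERIV_unique poly_DERIV by blast
  have dx: "deriv (xi1 \<sigma> a b \<beta> \<gamma> L1 L0 n) x = Dx" by (rule DERIV_imp_deriv[OF Dx])
  have de: "deriv (eta1 \<sigma> a b \<beta> \<gamma> L1 L0 n) x = De" by (rule DERIV_imp_deriv[OF De])
  have e10: "eta1 \<sigma> a b \<beta> \<gamma> L1 L0 n x \<noteq> 0" using def_eta1 by (simp add: L1_def L0_def)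
  have fin: "poly (pderiv (pderiv Q)) x + (- (xi1 \<sigma> a b \<beta> \<gamma> L1 L0 n x + eta2 \<sigma> a b \<beta> \<gamma> L1 L0 n x + De / eta1 \<sigma> a b \<beta> \<gamma> L1 L0 n x)) * poly (pderiv Q) x
     + (xi1 \<sigma> a b \<beta> \<gamma> L1 L0 n x * eta2 \<sigma> a b \<beta> \<gamma> L1 L0 n x - eta1 \<sigma> a b \<beta> \<gamma> L1 L0 n x * xi2 \<sigma> a b \<beta> \<gamma> L1 L0 n x
        + (xi1 \<sigma> a b \<beta> \<gamma> L1 L0 n x * De - Dx * eta1 \<sigma> a b \<beta> \<gamma> L1 L0 n x) / eta1 \<sigma> a b \<beta> \<gamma> L1 L0 n x) * poly Q x = 0"
    by (rule final_alg[OF e10 R1[OF xU] R2]) (simp add: R3 algebra_simps)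
  show ?thesis
    unfolding Rf_def Sf_def dx[unfolded L1_def L0_def] de[unfolded L1_def L0_def]
    using fin unfolding Q_def L1_def L0_def .
qed

end
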